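(* Let $E$ be an order continuous Banach lattice with a weak unit, represented over a probability space $(\Omega,\Sigma,\mu)$ as in the context, let $Y$ be a Banach space and $T\in\mathrm{DN\text{-}S}(E,Y)$. Then there exists $r>0$ such that for every measurable set $A\subset\Omega$ with $0<\mu(A)<r$, the restriction of $T$ to $E_A=\{x\in E:\operatorname{supp}x\subset A\}$ is an isomorphism (into $Y$).
   Context: A Banach lattice $E$ is order continuous if every net decreasing in order to $0$ converges in norm to $0$; $e\in E_+$ is a weak unit if $|x|\wedge e=0$ implies $x=0$. Representation: every order continuous Banach lattice $E$ with a weak unit can be represented over a probability space $(\Omega,\Sigma,\mu)$ so that $L_\infty(\mu)\subset E\subset L_1(\mu)$, $E$ is dense in $L_1(\mu)$, $L_\infty(\mu)$ is dense in $E$, $\|f\|_1\le\|f\|_E\le 2\|f\|_\infty$ for $f\in L_\infty(\mu)$, and the order of $E$ is the one induced by $L_1(\mu)$; such a representation is fixed. For $x\in E$, $\operatorname{supp}x=\{t\in\Omega: x(t)\neq 0\}$. An operator is strictly singular if it is an isomorphism on no closed infinite-dimensional subspace. $T\in\mathrm{L}(E,Y)$ is disjointly non-singular ($T\in\mathrm{DN\text{-}S}(E,Y)$) if there is no disjoint sequence $(x_n)$ of non-zero vectors of $E$ such that the restriction of $T$ to the closed span $[x_n]$ is strictly singular. *)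

theory Defs
  imports "HOL-Probability.Probability"
begin


definition lat_abs :: "'a::{ab_group_add, lattice} \<Rightarrow> 'a" where
  "lat_abs x = sup x (- x)"

definition banach_lattice :: "'e::{banach, ordered_real_vector, lattice} itself \<Rightarrow> bool" where
  "banach_lattice _ \<longleftrightarrow>
     (\<forall>x y :: 'e. lat_abs x \<le> lat_abs y \<longrightarrow> norm x \<le> norm y)"

text \<open>Order continuity: every net decreasing in order to 0 converges in norm to 0.
  Nets are given by an index set I with a directed preorder le; index sets are taken
  inside the type 'e, which suffices since every net decreasing to 0 can be
  reindexed by its own range (a downward directed set).\<close>
definition order_continuous :: "'e::{banach, ordered_real_vector, lattice} itself \<Rightarrow> bool" where
  "order_continuous _ \<longleftrightarrow>
     (\<forall>(I :: 'e set) (le :: 'e \<Rightarrow> 'e \<Rightarrow> bool) (x :: 'e \<Rightarrow> 'e).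
        (I \<noteq> {} \<and> (\<forall>a\<in>I. le a a) \<and> (\<forall>a\<in>I. \<forall>b\<in>I. \<forall>c\<in>I. le a b \<and> le b c \<longrightarrow> le a c)
          \<and> (\<forall>a\<in>I. \<forall>b\<in>I. \<exists>c\<in>I. le a c \<and> le b c)
          \<and> (\<forall>a\<in>I. \<forall>b\<in>I. le a b \<longrightarrow> x b \<le> x a)
          \<and> (\<forall>a\<in>I. 0 \<le> x a)
          \<and> (\<forall>z. (\<forall>a\<in>I. z \<le> x a) \<longrightarrow> z \<le> 0))
        \<longrightarrow> (\<forall>\<epsilon>>0. \<exists>a\<in>I. \<forall>b\<in>I. le a b \<longrightarrow> norm (x b) < \<epsilon>))"

definition weak_unit :: "'e::{banach, ordered_real_vector, lattice} \<Rightarrow> bool" where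
  "weak_unit e \<longleftrightarrow> 0 \<le> e \<and> (\<forall>x. inf (lat_abs x) e = 0 \<longrightarrow> x = 0)"

text \<open>The fixed function function_representation of E over a probability space M:
  J x is a representative of the class of x in L_1(M);
  L_inf(M) \<subseteq> E \<subseteq> L_1(M), E dense in L_1, L_inf dense in E,
  ||f||_1 \<le> ||f||_E \<le> 2||f||_inf for f in L_inf, order induced by L_1.\<close>
definition ess_bounded :: "'w measure \<Rightarrow> ('w \<Rightarrow> real) \<Rightarrow> bool" where
  "ess_bounded M f \<longleftrightarrow> (\<exists>C. AE t in M. \<bar>f t\<bar> \<le> C)"

definition function_representation ::
  "'w measure \<Rightarrow> ('e::{banach, ordered_real_vector, lattice} \<Rightarrow> 'w \<Rightarrow> real) \<Rightarrow> bool" where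
  "function_representation M J \<longleftrightarrow>
     prob_space M
   \<and> (\<forall>x. J x \<in> borel_measurable M \<and> integrable M (J x))
   \<and> (\<forall>x y. AE t in M. J (x + y) t = J x t + J y t)
   \<and> (\<forall>c x. AE t in M. J (c *\<^sub>R x) t = c * J x t)
   \<and> (\<forall>x y. x \<le> y \<longleftrightarrow> (AE t in M. J x t \<le> J y t))
   \<and> (\<forall>f \<in> borel_measurable M. ess_bounded M f \<longrightarrow> (\<exists>x. AE t in M. J x t = f t))
   \<and> (\<forall>f. integrable M f \<longrightarrow> (\<forall>\<epsilon>>0. \<exists>x. (\<integral>t. \<bar>f t - J x t\<bar> \<partial>M) < \<epsilon>))
   \<and> (\<forall>x. \<forall>\<epsilon>>0. \<exists>y. ess_bounded M (J y) \<and> norm (x - y) < \<epsilon>)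
   \<and> (\<forall>x. ess_bounded M (J x) \<longrightarrow> (\<integral>t. \<bar>J x t\<bar> \<partial>M) \<le> norm x)
   \<and> (\<forall>x C. (AE t in M. \<bar>J x t\<bar> \<le> C) \<longrightarrow> norm x \<le> 2 * C)"

definition band_of :: "'w measure \<Rightarrow> ('e \<Rightarrow> 'w \<Rightarrow> real) \<Rightarrow> 'w set \<Rightarrow> 'e set" where
  "band_of M J A = {x. AE t in M. J x t \<noteq> 0 \<longrightarrow> t \<in> A}"

definition iso_on :: "('e::real_normed_vector \<Rightarrow> 'y::real_normed_vector) \<Rightarrow> 'e set \<Rightarrow> bool" where
  "iso_on T Z \<longleftrightarrow> (\<exists>c>0. \<forall>z\<in>Z. c * norm z \<le> norm (T z))"

definition infinite_dimensional :: "'e::real_vector set \<Rightarrow> bool" where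
  "infinite_dimensional Z \<longleftrightarrow> (\<exists>B \<subseteq> Z. independent B \<and> infinite B)"

definition strictly_singular_on :: "('e::real_normed_vector \<Rightarrow> 'y::real_normed_vector) \<Rightarrow> 'e set \<Rightarrow> bool" where
  "strictly_singular_on T W \<longleftrightarrow>
     \<not> (\<exists>Z. Z \<subseteq> W \<and> subspace Z \<and> closed Z \<and> infinite_dimensional Z \<and> iso_on T Z)"

definition disjoint_elems :: "'e::{ab_group_add, lattice} \<Rightarrow> 'e \<Rightarrow> bool" where
  "disjoint_elems x y \<longleftrightarrow> inf (lat_abs x) (lat_abs y) = 0"

definition DN_S :: "('e::{banach, ordered_real_vector, lattice} \<Rightarrow> 'y::banach) \<Rightarrow> bool" where
  "DN_S T \<longleftrightarrow> bounded_linear T \<and>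
     \<not> (\<exists>x :: nat \<Rightarrow> 'e. (\<forall>n. x n \<noteq> 0) \<and> (\<forall>n m. n \<noteq> m \<longrightarrow> disjoint_elems (x n) (x m))
            \<and> strictly_singular_on T (closure (span (range x))))"

end

theory Submission
  imports Defs
begin


locale frep =
  fixes M :: "'w measure" and J :: "'e::{banach, ordered_real_vector, lattice} \<Rightarrow> 'w \<Rightarrow> real"
  assumes FR: "function_representation M J" and BL: "banach_lattice TYPE('e)"
begin

lemma prob: "prob_space M" using FR unfolding function_representation_def by auto
lemma meas[measurable]: "J x \<in> borel_measurable M" using FR unfolding function_representation_def by auto
lemma integ: "integrable M (J x)" using FR unfolding function_representation_def by auto
lemma Jadd: "AE t in M. J (x + y) t = J x t + J y t" using FR unfolding function_representation_def by auto
lemma Jscale: "AE t in M. J (c *\<^sub>R x) t = c * J x t" using FR unfolding function_representation_def by auto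
lemma le_iff: "x \<le> y \<longleftrightarrow> (AE t in M. J x t \<le> J y t)" using FR unfolding function_representation_def by auto
lemma ex_elem: "f \<in> borel_measurable M \<Longrightarrow> ess_bounded M f \<Longrightarrow> \<exists>x. AE t in M. J x t = f t"
  using FR unfolding function_representation_def by auto
lemma dense_bdd: "\<epsilon> > 0 \<Longrightarrow> \<exists>y. ess_bounded M (J y) \<and> norm (x - y) < \<epsilon>"
  using FR unfolding function_representation_def by auto
lemma int_le_bdd: "ess_bounded M (J x) \<Longrightarrow> (\<integral>t. \<bar>J x t\<bar> \<partial>M) \<le> norm x"
  using FR unfolding function_representation_def by auto
lemma norm_le2: "(AE t in M. \<bar>J x t\<bar> \<le> C) \<Longrightarrow> norm x \<le> 2 * C"
  using FR unfolding function_representation_def by auto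
lemma latnorm: "lat_abs (x::'e) \<le> lat_abs y \<Longrightarrow> norm x \<le> norm y"
  using BL unfolding banach_lattice_def by auto

lemma Jminus: "AE t in M. J (- x) t = - J x t"
  using Jscale[of "-1" x] by simp

lemma Jdiff: "AE t in M. J (x - y) t = J x t - J y t"
  using Jadd[of x "-y"] Jminus[of y] by eventually_elim simp

lemma Jzero: "AE t in M. J 0 t = 0"
  using Jscale[of 0 x] by simp

lemma eq_iff: "x = y \<longleftrightarrow> (AE t in M. J x t = J y t)"
proof
  assume "AE t in M. J x t = J y t"
  then have "x \<le> y" "y \<le> x" unfolding le_iff by (auto elim: AE_mp)
  then show "x = y" by simp
qed simp

lemma Jabs: "AE t in M. J (lat_abs x) t = \<bar>J x t\<bar>"
proof -
  define a where "a = lat_abs x"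
  have xa: "x \<le> a" "- x \<le> a" unfolding a_def lat_abs_def by auto
  have lo: "AE t in M. \<bar>J x t\<bar> \<le> J a t"
    using xa[unfolded le_iff] Jminus[of x] by eventually_elim auto
  define g where "g t = max 0 (min (J a t - \<bar>J x t\<bar>) 1)" for t
  have gm: "g \<in> borel_measurable M" unfolding g_def by measurable
  have gb: "ess_bounded M g" unfolding ess_bounded_def g_def
    by (intro exI[of _ 1] AE_I2) auto
  obtain b where b: "AE t in M. J b t = g t" using ex_elem[OF gm gb] by blast
  have "x \<le> a - b" "- x \<le> a - b" unfolding le_iff
    using lo b Jdiff[of a b] Jminus[of x] by (eventually_elim, auto simp: g_def)+
  then have "a \<le> a - b" unfolding a_def lat_abs_def by simp
  then have "b \<le> 0" by (simp add: le_diff_eq)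
  then have "AE t in M. J b t \<le> 0" using Jzero unfolding le_iff
    by (auto elim: AE_mp)
  then have "AE t in M. J a t \<le> \<bar>J x t\<bar>"
    using b by eventually_elim (auto simp: g_def)
  with lo show ?thesis unfolding a_def[symmetric] by eventually_elim auto
qed

lemma norm_mono: assumes "AE t in M. \<bar>J x t\<bar> \<le> \<bar>J y t\<bar>" shows "norm x \<le> norm y"
  apply (rule latnorm)
  unfolding le_iff using assms Jabs[of x] Jabs[of y] by eventually_elim auto

lemma norm_eq: "(AE t in M. \<bar>J x t\<bar> = \<bar>J y t\<bar>) \<Longrightarrow> norm x = norm y"
  by (rule antisym; rule norm_mono; auto elim: AE_mp)

lemma Jsum: "finite I \<Longrightarrow> AE t in M. J (\<Sum>i\<in>I. f i) t = (\<Sum>i\<in>I. J (f i) t)"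
proof (induction I rule: finite_induct)
  case empty then show ?case using Jzero by simp
next
  case (insert i I)
  have "AE t in M. J (f i + (\<Sum>i\<in>I. f i)) t = J (f i) t + (\<Sum>i\<in>I. J (f i) t)"
    using insert.IH Jadd[of "f i" "\<Sum>i\<in>I. f i"] by eventually_elim auto
  then show ?case using insert.hyps by simp
qed

lemma L1_le: "(\<integral>t. \<bar>J x t\<bar> \<partial>M) \<le> norm x"
proof -
  have "\<exists>u. AE t in M. J u t = min \<bar>J x t\<bar> (real n)" for n :: nat
    by (rule ex_elem) (auto simp: ess_bounded_def intro!: exI[of _ "real n"])
  then obtain u where u: "\<And>n. AE t in M. J (u n) t = min \<bar>J x t\<bar> (real n)" by metis
  have "(\<lambda>n. \<integral>t. min \<bar>J x t\<bar> (real n) \<partial>M) \<longlonglongrightarrow> (\<integral>t. \<bar>J x t\<bar> \<partial>M)"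
  proof (rule integral_dominated_convergence[where w="\<lambda>t. \<bar>J x t\<bar>"])
    show "integrable M (\<lambda>t. \<bar>J x t\<bar>)" using integ by auto
    show "AE t in M. (\<lambda>n. min \<bar>J x t\<bar> (real n)) \<longlonglongrightarrow> \<bar>J x t\<bar>"
    proof (rule AE_I2)
      fix t
      obtain N :: nat where "\<bar>J x t\<bar> \<le> real N" using real_arch_simple by blast
      then have "\<forall>n\<ge>N. min \<bar>J x t\<bar> (real n) = \<bar>J x t\<bar>" by auto
      then show "(\<lambda>n. min \<bar>J x t\<bar> (real n)) \<longlonglongrightarrow> \<bar>J x t\<bar>"
        by (intro tendsto_eventually) (auto simp: eventually_sequentially)
    qed
  qed auto
  moreover have "(\<integral>t. min \<bar>J x t\<bar> (real n) \<partial>M) \<le> norm x" for n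
  proof -
    have bd: "ess_bounded M (J (u n))" unfolding ess_bounded_def
      using u[of n] by (intro exI[of _ "real n"]) (auto elim: AE_mp)
    have "(\<integral>t. min \<bar>J x t\<bar> (real n) \<partial>M) = (\<integral>t. \<bar>J (u n) t\<bar> \<partial>M)"
      using u[of n] by (intro integral_cong_AE) (auto elim: AE_mp)
    also have "\<dots> \<le> norm (u n)" by (rule int_le_bdd[OF bd])
    also have "\<dots> \<le> norm x" by (rule norm_mono) (use u[of n] in \<open>auto elim: AE_mp\<close>)
    finally show ?thesis .
  qed
  ultimately show ?thesis by (intro LIMSEQ_le_const2) auto
qed


lemma restrict_ex:
  assumes "ess_bounded M (J u)" "B \<in> sets M"
  shows "\<exists>w. AE t in M. J w t = indicator B t * J u t"
proof (rule ex_elem)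
  show "(\<lambda>t. indicator B t * J u t) \<in> borel_measurable M" using assms(2) by measurable
  from assms(1) obtain C where "AE t in M. \<bar>J u t\<bar> \<le> C" unfolding ess_bounded_def by auto
  then have "AE t in M. \<bar>indicator B t * J u t\<bar> \<le> max C 0"
    by eventually_elim (auto simp: indicator_def)
  then show "ess_bounded M (\<lambda>t. indicator B t * J u t)" unfolding ess_bounded_def by blast
qed

lemma measure_tail:
  assumes B: "\<And>k. B k \<in> sets M" "\<And>k. measure M (B k) < (1/2)^k"
  shows "measure M (\<Union>k. B (k + n)) \<le> 2 * (1/2)^n"
proof -
  interpret prob_space M by (rule prob)
  have sg: "summable (\<lambda>k. (1/2::real)^(k+n))"
    by (simp add: power_add summable_mult2)
  have sm: "summable (\<lambda>k. measure M (B (k + n)))"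
    by (rule summable_comparison_test'[OF sg, of 0]) (use B(2) less_imp_le in auto)
  have "measure M (\<Union>k. B (k + n)) \<le> (\<Sum>k. measure M (B (k + n)))"
    by (rule finite_measure_subadditive_countably) (use B(1) sm in auto)
  also have "\<dots> \<le> (\<Sum>k. (1/2::real)^(k+n))"
    by (rule suminf_le[OF _ sm sg]) (use B(2) less_imp_le in auto)
  also have "\<dots> = 2 * (1/2)^n"
  proof -
    have "(\<Sum>k. (1/2::real)^(k+n)) = (\<Sum>k. (1/2::real)^k * (1/2)^n)" by (simp add: power_add)
    also have "\<dots> = (\<Sum>k. (1/2::real)^k) * (1/2)^n" using suminf_mult2[of "\<lambda>k. (1/2::real)^k" "(1/2)^n"] by simp
    also have "\<dots> = 2 * (1/2)^n" using suminf_geometric[of "1/2::real"] by simp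
    finally show ?thesis .
  qed
  finally show ?thesis .
qed

lemma abs_cont:
  assumes OC: "order_continuous TYPE('e)" and ub: "ess_bounded M (J u)" and eta: "\<eta> > 0"
  shows "\<exists>\<rho>>0. \<forall>B\<in>sets M. measure M B < \<rho> \<longrightarrow>
            (\<forall>w. (AE t in M. J w t = indicator B t * J u t) \<longrightarrow> norm w < \<eta>)"
proof (rule ccontr)
  interpret prob_space M by (rule prob)
  assume "\<not> ?thesis"
  then have "\<forall>n::nat. \<exists>B\<in>sets M. measure M B < (1/2)^n \<and>
      (\<exists>w. (AE t in M. J w t = indicator B t * J u t) \<and> \<eta> \<le> norm w)"
    by (metis not_less zero_less_divide_1_iff zero_less_numeral zero_less_power)
  then obtain B v where B: "\<And>n. B n \<in> sets M" "\<And>n. measure M (B n) < (1/2)^n"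
    and v: "\<And>n. AE t in M. J (v n) t = indicator (B n) t * J u t" "\<And>n. \<eta> \<le> norm (v n)"
    by metis
  define C where "C n = (\<Union>k. B (k + n))" for n
  have Cs: "C n \<in> sets M" for n unfolding C_def using B(1) by auto
  have Cm: "measure M (C n) \<le> 2 * (1/2)^n" for n unfolding C_def by (rule measure_tail[OF B])
  have Cdec: "m \<ge> n \<Longrightarrow> C m \<subseteq> C n" for m n
    unfolding C_def by (auto, metis add.commute le_add_diff_inverse add.assoc)
  have BC: "B n \<subseteq> C n" for n unfolding C_def by (rule subsetI, rule UN_I[of 0]) auto
  have "\<exists>w. AE t in M. J w t = indicator (C n) t * \<bar>J u t\<bar>" for n
  proof -
    obtain a where a: "AE t in M. J a t = \<bar>J u t\<bar>" using Jabs[of u] by blast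
    from ub obtain K where K: "AE t in M. \<bar>J u t\<bar> \<le> K" unfolding ess_bounded_def by auto
    have "AE t in M. \<bar>J a t\<bar> \<le> K" using K a by eventually_elim auto
    then have "ess_bounded M (J a)" unfolding ess_bounded_def by blast
    from restrict_ex[OF this Cs[of n]] obtain w where "AE t in M. J w t = indicator (C n) t * J a t" ..
    then have "AE t in M. J w t = indicator (C n) t * \<bar>J u t\<bar>" using a by eventually_elim auto
    then show ?thesis ..
  qed
  then obtain w where w: "\<And>n. AE t in M. J (w n) t = indicator (C n) t * \<bar>J u t\<bar>" by metis
  have wdec: "w m \<le> w n" if nm: "n \<le> m" for m n
  proof -
    have sub: "C m \<subseteq> C n" using Cdec nm by blast
    show ?thesis
    unfolding le_iff using w[of n] w[of m]
    by eventually_elim (use sub in \<open>auto simp: indicator_def\<close>)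
  qed
  have wpos: "0 \<le> w n" for n
    unfolding le_iff using w[of n] Jzero by eventually_elim auto
  define D where "D = (\<Inter>n. C n)"
  have Ds: "D \<in> sets M" unfolding D_def using Cs by auto
  have "measure M D \<le> 2 * (1/2)^n" for n
  proof -
    have "D \<subseteq> C n" unfolding D_def by blast
    then show ?thesis using finite_measure_mono[of D "C n"] Cs[of n] Cm[of n] by linarith
  qed
  moreover have "(\<lambda>n. 2 * (1/2::real)^n) \<longlonglongrightarrow> 0"
    by (intro tendsto_mult_right_zero LIMSEQ_power_zero) simp
  ultimately have "measure M D \<le> 0"
    by (intro LIMSEQ_le_const[where X="\<lambda>n. 2 * (1/2::real)^n"]) auto
  then have "measure M D = 0" using measure_nonneg[of M D] by linarith
  then have AD: "AE t in M. t \<notin> D" using prob_eq_0[OF Ds] by simp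
  have inf0: "z \<le> 0" if z: "\<forall>a\<in>range w. z \<le> a" for z
  proof -
    have "\<forall>n. AE t in M. J z t \<le> J (w n) t" using z unfolding le_iff by auto
    then have A1: "AE t in M. \<forall>n. J z t \<le> J (w n) t" by (simp add: AE_all_countable)
    have A2: "AE t in M. \<forall>n. J (w n) t = indicator (C n) t * \<bar>J u t\<bar>"
      using w by (simp add: AE_all_countable)
    show ?thesis unfolding le_iff using A1 A2 AD Jzero
    proof eventually_elim
      case (elim t)
      then obtain n where "t \<notin> C n" unfolding D_def by auto
      with elim show ?case by (metis indicator_simps(2) mult_zero_left)
    qed
  qed
  have hyp: "range w \<noteq> {} \<and> (\<forall>a\<in>range w. a \<le> a)
      \<and> (\<forall>a\<in>range w. \<forall>b\<in>range w. \<forall>c\<in>range w. b \<le> a \<and> c \<le> b \<longrightarrow> c \<le> a)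
      \<and> (\<forall>a\<in>range w. \<forall>b\<in>range w. \<exists>c\<in>range w. c \<le> a \<and> c \<le> b)
      \<and> (\<forall>a\<in>range w. \<forall>b\<in>range w. b \<le> a \<longrightarrow> id b \<le> id a)
      \<and> (\<forall>a\<in>range w. 0 \<le> id a)
      \<and> (\<forall>z. (\<forall>a\<in>range w. z \<le> id a) \<longrightarrow> z \<le> 0)"
  proof (intro conjI)
    show "\<forall>a\<in>range w. \<forall>b\<in>range w. \<exists>c\<in>range w. c \<le> a \<and> c \<le> b"
    proof (intro ballI)
      fix a b assume "a \<in> range w" "b \<in> range w"
      then obtain i j where ij: "a = w i" "b = w j" by auto
      show "\<exists>c\<in>range w. c \<le> a \<and> c \<le> b"
        by (rule bexI[of _ "w (max i j)"]) (auto simp: ij intro!: wdec)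
    qed
    show "\<forall>a\<in>range w. \<forall>b\<in>range w. \<forall>c\<in>range w. b \<le> a \<and> c \<le> b \<longrightarrow> c \<le> a"
      using order_trans by blast
    show "\<forall>z. (\<forall>a\<in>range w. z \<le> id a) \<longrightarrow> z \<le> 0" using inf0 by simp
    show "\<forall>a\<in>range w. 0 \<le> id a" using wpos by simp
    show "range w \<noteq> {}" by simp
    show "\<forall>a\<in>range w. a \<le> a" by simp
    show "\<forall>a\<in>range w. \<forall>b\<in>range w. b \<le> a \<longrightarrow> id b \<le> id a" by simp
  qed
  have imp: "(range w \<noteq> {} \<and> (\<forall>a\<in>range w. a \<le> a)
      \<and> (\<forall>a\<in>range w. \<forall>b\<in>range w. \<forall>c\<in>range w. b \<le> a \<and> c \<le> b \<longrightarrow> c \<le> a)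
      \<and> (\<forall>a\<in>range w. \<forall>b\<in>range w. \<exists>c\<in>range w. c \<le> a \<and> c \<le> b)
      \<and> (\<forall>a\<in>range w. \<forall>b\<in>range w. b \<le> a \<longrightarrow> id b \<le> id a)
      \<and> (\<forall>a\<in>range w. 0 \<le> id a)
      \<and> (\<forall>z. (\<forall>a\<in>range w. z \<le> id a) \<longrightarrow> z \<le> 0))
      \<longrightarrow> (\<forall>\<epsilon>>0. \<exists>a\<in>range w. \<forall>b\<in>range w. b \<le> a \<longrightarrow> norm (id b) < \<epsilon>)"
    by (rule OC[unfolded order_continuous_def, THEN spec[of _ "range w"],
        THEN spec[of _ "\<lambda>a b. b \<le> a"], THEN spec[of _ id]])
  have "\<forall>\<epsilon>>0. \<exists>a\<in>range w. \<forall>b\<in>range w. b \<le> a \<longrightarrow> norm (id b) < \<epsilon>"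
    using imp hyp by (rule mp)
  then have "\<exists>a\<in>range w. \<forall>b\<in>range w. b \<le> a \<longrightarrow> norm (id b) < \<eta>" using eta by blast
  then obtain n where "\<forall>b\<in>range w. b \<le> w n \<longrightarrow> norm (id b) < \<eta>" by blast
  then have "norm (w n) < \<eta>" by auto
  moreover have "norm (v n) \<le> norm (w n)"
    using v(1)[of n] w[of n] by (intro norm_mono, eventually_elim) (use BC[of n] in \<open>auto simp: indicator_def\<close>)
  ultimately show False using v(2)[of n] by simp
qed

end


context frep begin

lemma disj_from_AE:
  assumes "AE t in M. J x t * J y t = 0" shows "disjoint_elems x y"
proof -
  have a0: "0 \<le> lat_abs x" "0 \<le> lat_abs y"
    unfolding le_iff using Jabs[of x] Jabs[of y] Jzero by (eventually_elim, auto)+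
  have "inf (lat_abs x) (lat_abs y) \<le> lat_abs x" "inf (lat_abs x) (lat_abs y) \<le> lat_abs y" by auto
  then have "inf (lat_abs x) (lat_abs y) \<le> 0"
    unfolding le_iff using Jabs[of x] Jabs[of y] Jzero assms
    by eventually_elim (auto simp: mult_eq_0_iff)
  moreover have "0 \<le> inf (lat_abs x) (lat_abs y)" using a0 by simp
  ultimately show ?thesis unfolding disjoint_elems_def by (rule antisym)
qed

lemma coeff_bound:
  assumes D: "\<And>n m. n \<noteq> m \<Longrightarrow> AE t in M. J (y n) t * J (y m) t = 0" and k: "k < (N::nat)"
  shows "\<bar>a k\<bar> * norm (y k) \<le> norm (\<Sum>n<N. a n *\<^sub>R y n)"
proof -
  have A1: "AE t in M. J (\<Sum>n<N. a n *\<^sub>R y n) t = (\<Sum>n<N. J (a n *\<^sub>R y n) t)"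
    using Jsum[of "{..<N}" "\<lambda>n. a n *\<^sub>R y n"] by simp
  have A2: "AE t in M. \<forall>n. J (a n *\<^sub>R y n) t = a n * J (y n) t"
    using Jscale by (simp add: AE_all_countable)
  have A3: "AE t in M. \<forall>n. n \<noteq> k \<longrightarrow> J (y n) t * J (y k) t = 0"
    using D by (simp add: AE_all_countable)
  have "norm (a k *\<^sub>R y k) \<le> norm (\<Sum>n<N. a n *\<^sub>R y n)"
  proof (rule norm_mono)
    show "AE t in M. \<bar>J (a k *\<^sub>R y k) t\<bar> \<le> \<bar>J (\<Sum>n<N. a n *\<^sub>R y n) t\<bar>"
      using A1 A2 A3
    proof eventually_elim
      case (elim t)
      show ?case
      proof (cases "J (y k) t = 0")
        case True then show ?thesis using elim by simp
      next
        case False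
        then have z: "n \<noteq> k \<Longrightarrow> J (y n) t = 0" for n using elim(3) by auto
        have "(\<Sum>n<N. a n * J (y n) t) = a k * J (y k) t + (\<Sum>n\<in>{..<N}-{k}. a n * J (y n) t)"
          using k by (simp add: sum.remove)
        also have "(\<Sum>n\<in>{..<N}-{k}. a n * J (y n) t) = 0" using z by (intro sum.neutral) auto
        finally show ?thesis using elim by simp
      qed
    qed
  qed
  then show ?thesis by simp
qed

lemma bl_int:
  assumes g: "g \<in> borel_measurable M" and G: "AE t in M. \<bar>g t\<bar> \<le> G" "0 \<le> G"
  shows "bounded_linear (\<lambda>x. \<integral>t. J x t * g t \<partial>M)"
proof -
  note g[measurable]
  have int: "integrable M (\<lambda>t. J x t * g t)" for x
  proof (rule Bochner_Integration.integrable_bound)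
    show "integrable M (\<lambda>t. G * \<bar>J x t\<bar>)" using integ by auto
    show "(\<lambda>t. J x t * g t) \<in> borel_measurable M" using g by measurable
    show "AE t in M. norm (J x t * g t) \<le> norm (G * \<bar>J x t\<bar>)"
      using G(1) by eventually_elim (use G(2) in \<open>auto simp: abs_mult mult.commute intro: mult_right_mono\<close>)
  qed
  show ?thesis
  proof (rule bounded_linear_intro[where K=G])
    fix x y
    have "(\<integral>t. J (x + y) t * g t \<partial>M) = (\<integral>t. J x t * g t + J y t * g t \<partial>M)"
      using Jadd[of x y] by (intro integral_cong_AE; (measurable)?) (auto simp: distrib_right elim: AE_mp)
    also have "\<dots> = (\<integral>t. J x t * g t \<partial>M) + (\<integral>t. J y t * g t \<partial>M)"
      by (rule Bochner_Integration.integral_add[OF int int])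
    finally show "(\<integral>t. J (x + y) t * g t \<partial>M) = (\<integral>t. J x t * g t \<partial>M) + (\<integral>t. J y t * g t \<partial>M)" .
  next
    fix r x
    have "(\<integral>t. J (r *\<^sub>R x) t * g t \<partial>M) = (\<integral>t. r * (J x t * g t) \<partial>M)"
      using Jscale[of r x] by (intro integral_cong_AE; (measurable)?) (auto elim: AE_mp)
    also have "\<dots> = r * (\<integral>t. J x t * g t \<partial>M)" by simp
    finally show "(\<integral>t. J (r *\<^sub>R x) t * g t \<partial>M) = r *\<^sub>R (\<integral>t. J x t * g t \<partial>M)" by simp
  next
    fix x
    have "norm (\<integral>t. J x t * g t \<partial>M) \<le> (\<integral>t. norm (J x t * g t) \<partial>M)"
      by (rule integral_norm_bound)
    also have "\<dots> \<le> (\<integral>t. G * \<bar>J x t\<bar> \<partial>M)"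
    proof (rule integral_mono_AE)
      show "integrable M (\<lambda>t. norm (J x t * g t))" using int[of x] by (rule integrable_norm)
      show "integrable M (\<lambda>t. G * \<bar>J x t\<bar>)" using integ by auto
      show "AE t in M. norm (J x t * g t) \<le> G * \<bar>J x t\<bar>"
        using G(1) by eventually_elim (use G(2) in \<open>auto simp: abs_mult mult.commute intro: mult_right_mono\<close>)
    qed
    also have "\<dots> = G * (\<integral>t. \<bar>J x t\<bar> \<partial>M)" by simp
    also have "\<dots> \<le> G * norm x" using L1_le G(2) by (rule mult_left_mono)
    finally show "norm (\<integral>t. J x t * g t \<partial>M) \<le> norm x * G" by (simp add: mult.commute)
  qed
qed

end



lemma geom_tail:
  "(\<Sum>n<N. if N0 \<le> n then (1/4::real)^n else 0) \<le> 4/3 * (1/4)^N0"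
proof -
  define h where "h n = (if N0 \<le> n then (1/4::real)^n else 0)" for n
  have sh: "summable h"
    by (rule summable_comparison_test'[OF summable_geometric[of "1/4::real"], of 0]) (auto simp: h_def)
  have "(\<Sum>n<N. h n) \<le> suminf h" by (rule sum_le_suminf[OF sh]) (auto simp: h_def)
  also have "suminf h = (\<Sum>n. h (n + N0)) + sum h {..<N0}" by (rule suminf_split_initial_segment[OF sh])
  also have "sum h {..<N0} = 0" by (auto simp: h_def)
  also have "(\<Sum>n. h (n + N0)) = (\<Sum>n. (1/4::real)^n * (1/4)^N0)"
    by (simp add: h_def power_add)
  also have "\<dots> = 4/3 * (1/4)^N0"
    using suminf_mult2[of "\<lambda>n. (1/4::real)^n" "(1/4)^N0"] suminf_geometric[of "1/4::real"] by simp
  finally show ?thesis by (simp add: h_def)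
qed

lemma span_range_repr:
  fixes y :: "nat \<Rightarrow> 'a::real_vector"
  assumes "s \<in> span (range y)"
  shows "\<exists>a N. s = (\<Sum>n<N. a n *\<^sub>R y n)"
proof -
  have "\<exists>a N. \<forall>N'\<ge>N. s = (\<Sum>n<N'. a n *\<^sub>R y n)"
  proof (rule real_vector.span_induct_alt[OF assms, where h="\<lambda>s. \<exists>a N. \<forall>N'\<ge>N. s = (\<Sum>n<N'. a n *\<^sub>R y n)"])
    show "\<exists>a N. \<forall>N'\<ge>N. 0 = (\<Sum>n<N'. a n *\<^sub>R y n)" by (auto intro!: exI[of _ "\<lambda>_. 0"])
  next
    fix c x v assume 2: "x \<in> range y" "\<exists>a N. \<forall>N'\<ge>N. v = (\<Sum>n<N'. a n *\<^sub>R y n)"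
    then obtain m where m: "x = y m" by auto
    from 2 obtain a N where aN: "\<forall>N'\<ge>N. v = (\<Sum>n<N'. a n *\<^sub>R y n)" by auto
    show "\<exists>a N. \<forall>N'\<ge>N. c *\<^sub>R x + v = (\<Sum>n<N'. a n *\<^sub>R y n)"
    proof (intro exI allI impI)
      fix N' assume N': "max N (Suc m) \<le> N'"
      have "(\<Sum>n<N'. (a n + (if n = m then c else 0)) *\<^sub>R y n)
          = (\<Sum>n<N'. a n *\<^sub>R y n) + (\<Sum>n<N'. (if n = m then c else 0) *\<^sub>R y n)"
        by (simp add: scaleR_add_left sum.distrib)
      also have "(\<Sum>n<N'. (if n = m then c else 0) *\<^sub>R y n) = c *\<^sub>R y m"
        using N' by (simp add: if_distrib[of "\<lambda>r. r *\<^sub>R _"] cong: if_cong)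
      also have "(\<Sum>n<N'. a n *\<^sub>R y n) = v" using aN N' by (metis max.boundedE)
      finally show "c *\<^sub>R x + v = (\<Sum>n<N'. (a n + (if n = m then c else 0)) *\<^sub>R y n)"
        using m by simp
    qed
  qed
  then show ?thesis by blast
qed

context frep begin

lemma final_ss:
  fixes T :: "'e \<Rightarrow> 'y::real_normed_vector" and y :: "nat \<Rightarrow> 'e"
  assumes T: "bounded_linear T"
    and Y1: "\<And>n. 1/4 \<le> norm (y n)" and Y2: "\<And>n. norm (T (y n)) \<le> (1/4)^n"
    and Y3: "\<And>n. ess_bounded M (J (y n))"
    and Y4: "\<And>n m. n \<noteq> m \<Longrightarrow> AE t in M. J (y n) t * J (y m) t = 0"
  shows "strictly_singular_on T (closure (span (range y)))"
proof -
  obtain G where G: "\<And>k. AE t in M. \<bar>J (y k) t\<bar> \<le> G k" "\<And>k. 0 \<le> G k"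
  proof -
    have "\<exists>C. (AE t in M. \<bar>J (y k) t\<bar> \<le> C) \<and> 0 \<le> C" for k
    proof -
      obtain C where "AE t in M. \<bar>J (y k) t\<bar> \<le> C" using Y3[of k] unfolding ess_bounded_def by auto
      then have "AE t in M. \<bar>J (y k) t\<bar> \<le> max C 0" by eventually_elim auto
      then show ?thesis by (intro exI[of _ "max C 0"]) auto
    qed
    then show ?thesis using that by metis
  qed
  define c where "c k = (\<integral>t. J (y k) t * J (y k) t \<partial>M)" for k
  have intsq: "integrable M (\<lambda>t. J (y k) t * J (y k) t)" for k
  proof (rule Bochner_Integration.integrable_bound)
    show "integrable M (\<lambda>t. G k * \<bar>J (y k) t\<bar>)" using integ by auto
    show "(\<lambda>t. J (y k) t * J (y k) t) \<in> borel_measurable M" by measurable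
    show "AE t in M. norm (J (y k) t * J (y k) t) \<le> norm (G k * \<bar>J (y k) t\<bar>)"
      using G(1)[of k]
    proof eventually_elim
      case (elim t)
      have "\<bar>J (y k) t\<bar> * \<bar>J (y k) t\<bar> \<le> G k * \<bar>J (y k) t\<bar>" using elim by (intro mult_right_mono) auto
      then show ?case using G(2)[of k] by (simp add: abs_mult)
    qed
  qed
  have cpos: "0 < c k" for k
  proof -
    have "0 \<le> c k" unfolding c_def by (rule integral_nonneg_AE) auto
    moreover have "c k \<noteq> 0"
    proof
      assume "c k = 0"
      then have "AE t in M. J (y k) t * J (y k) t = 0"
        using integral_nonneg_eq_0_iff_AE[OF intsq[of k]] unfolding c_def by auto
      then have "AE t in M. J (y k) t = J 0 t" using Jzero by eventually_elim auto
      then have "y k = 0" using eq_iff by blast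
      then show False using Y1[of k] by simp
    qed
    ultimately show ?thesis by simp
  qed
  define g where "g k t = J (y k) t / c k" for k t
  define \<phi> where "\<phi> k x = (\<integral>t. J x t * g k t \<partial>M)" for k x
  have blphi: "bounded_linear (\<phi> k)" for k
    unfolding \<phi>_def[abs_def]
  proof (rule bl_int)
    show "g k \<in> borel_measurable M" unfolding g_def by measurable
    show "AE t in M. \<bar>g k t\<bar> \<le> G k / c k"
      using G(1)[of k] by eventually_elim (use cpos[of k] in \<open>auto simp: g_def divide_right_mono\<close>)
    show "0 \<le> G k / c k" using G(2)[of k] cpos[of k] by simp
  qed
  have linphi: "linear (\<phi> k)" for k using blphi by (rule bounded_linear.linear)
  have phiy: "\<phi> k (y n) = (if n = k then 1 else 0)" for k n
  proof (cases "n = k")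
    case True
    have "\<phi> k (y n) = (\<integral>t. J (y k) t * J (y k) t / c k \<partial>M)"
      unfolding \<phi>_def g_def True by simp
    also have "\<dots> = c k / c k" unfolding c_def by simp
    finally show ?thesis using cpos[of k] True by simp
  next
    case False
    have "AE t in M. J (y n) t * g k t = 0" using Y4[OF False] by eventually_elim (simp add: g_def)
    then have "\<phi> k (y n) = 0" unfolding \<phi>_def by (rule integral_eq_zero_AE)
    then show ?thesis using False by simp
  qed
  have coef: "\<phi> k (\<Sum>n<N. a n *\<^sub>R y n) = a k" if "k < N" for k N a
  proof -
    have "\<phi> k (\<Sum>n<N. a n *\<^sub>R y n) = (\<Sum>n<N. a n * \<phi> k (y n))"
      by (simp add: real_vector.linear_sum[OF linphi] real_vector.linear_scale[OF linphi])
    also have "\<dots> = (\<Sum>n<N. if n = k then a k else 0)" by (intro sum.cong) (auto simp: phiy)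
    also have "\<dots> = a k" using that by simp
    finally show ?thesis .
  qed
  define \<tau> where "\<tau> N0 = 16/3 * (1/4::real)^N0" for N0
  have tail: "norm (T s) \<le> \<tau> N0 * norm s"
    if s: "s \<in> span (range y)" and z: "\<And>k. k < N0 \<Longrightarrow> \<phi> k s = 0" for s N0
  proof -
    obtain a N where sa: "s = (\<Sum>n<N. a n *\<^sub>R y n)" using span_range_repr[OF s] by blast
    have "T s = (\<Sum>n<N. a n *\<^sub>R T (y n))"
      unfolding sa using bounded_linear.linear[OF T]
      by (simp add: real_vector.linear_sum real_vector.linear_scale)
    then have "norm (T s) \<le> (\<Sum>n<N. norm (a n *\<^sub>R T (y n)))" by (metis norm_sum)
    also have "\<dots> \<le> (\<Sum>n<N. 4 * norm s * (if N0 \<le> n then (1/4::real)^n else 0))"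
    proof (rule sum_mono)
      fix n assume n: "n \<in> {..<N}"
      show "norm (a n *\<^sub>R T (y n)) \<le> 4 * norm s * (if N0 \<le> n then (1/4::real)^n else 0)"
      proof (cases "N0 \<le> n")
        case False
        then have "a n = 0" using z[of n] coef[of n N a] n sa by auto
        then show ?thesis by simp
      next
        case True
        have cb: "\<bar>a n\<bar> * norm (y n) \<le> norm s" unfolding sa
          by (rule coeff_bound) (use Y4 n in auto)
        have "\<bar>a n\<bar> \<le> 4 * norm s"
        proof -
          have "\<bar>a n\<bar> * (1/4) \<le> \<bar>a n\<bar> * norm (y n)" by (rule mult_left_mono[OF Y1]) simp
          then show ?thesis using cb by linarith
        qed
        then have "\<bar>a n\<bar> * norm (T (y n)) \<le> 4 * norm s * (1/4)^n"
          by (rule mult_mono[OF _ Y2]) auto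
        then show ?thesis using True by simp
      qed
    qed
    also have "\<dots> = 4 * norm s * (\<Sum>n<N. if N0 \<le> n then (1/4::real)^n else 0)"
      by (simp add: sum_distrib_left)
    also have "\<dots> \<le> 4 * norm s * (4/3 * (1/4)^N0)"
      by (rule mult_left_mono[OF geom_tail]) simp
    finally show ?thesis unfolding \<tau>_def by (simp add: algebra_simps)
  qed
  show ?thesis unfolding strictly_singular_on_def
  proof
    assume "\<exists>Z. Z \<subseteq> closure (span (range y)) \<and> subspace Z \<and> closed Z \<and> infinite_dimensional Z \<and> iso_on T Z"
    then obtain Z where Z: "Z \<subseteq> closure (span (range y))" "subspace Z" "infinite_dimensional Z" "iso_on T Z"
      by blast
    from Z(4) obtain cc where cc: "cc > 0" "\<And>z. z \<in> Z \<Longrightarrow> cc * norm z \<le> norm (T z)"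
      unfolding iso_on_def by blast
    obtain N0 where N0: "(1/4::real)^N0 < 3 * cc / 16" using real_arch_pow_inv[of "3*cc/16" "1/4::real"] cc by auto
    have tauc: "\<tau> N0 < cc" using N0 unfolding \<tau>_def by simp
    define L where "L x = (\<Sum>k<N0. \<phi> k x *\<^sub>R y k)" for x
    have blL: "bounded_linear L" unfolding L_def[abs_def]
      by (intro bounded_linear_sum) (rule bounded_linear_compose[OF bounded_linear_scaleR_left blphi])
    have linL: "linear L" using blL by (rule bounded_linear.linear)
    have phiL: "\<phi> j (L x) = \<phi> j x" if "j < N0" for j x
    proof -
      have "\<phi> j (L x) = (\<Sum>k<N0. \<phi> k x * \<phi> j (y k))"
        unfolding L_def by (simp add: real_vector.linear_sum[OF linphi] real_vector.linear_scale[OF linphi])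
      also have "\<dots> = (\<Sum>k<N0. if k = j then \<phi> j x else 0)" by (intro sum.cong) (auto simp: phiy)
      also have "\<dots> = \<phi> j x" using that by simp
      finally show ?thesis .
    qed
    have Lspan: "L x \<in> span (y ` {..<N0})" for x
      unfolding L_def by (intro real_vector.span_sum real_vector.span_scale real_vector.span_base) auto
    have Lspan2: "L x \<in> span (range y)" for x
      using Lspan[of x] real_vector.span_mono[of "y ` {..<N0}" "range y"] by auto
    from Z(3) obtain B where B: "B \<subseteq> Z" "independent B" "infinite B"
      unfolding infinite_dimensional_def by blast
    obtain S where S: "finite S" "card S = Suc N0" "S \<subseteq> B"
      using infinite_arbitrarily_large[OF B(3)] by blast
    have indS: "independent S" using B(2) S(3) by (rule real_vector.independent_mono)
    have spanSZ: "span S \<subseteq> Z" using S(3) B(1) Z(2) by (intro real_vector.span_minimal) auto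
    have "\<exists>z\<in>span S. z \<noteq> 0 \<and> L z = 0"
    proof (rule ccontr)
      assume "\<not> ?thesis"
      then have "\<forall>z\<in>span S. L z = 0 \<longrightarrow> z = 0" by blast
      then have inj: "inj_on L (span S)"
        using real_vector.linear_inj_on_iff_eq_0[OF linL real_vector.subspace_span] by blast
      have "independent (L ` S)" by (rule real_vector.linear_independent_injective_image[OF linL indS inj])
      moreover have "L ` S \<subseteq> span (y ` {..<N0})" using Lspan by auto
      ultimately have "card (L ` S) \<le> card (y ` {..<N0})"
        using real_vector.independent_span_bound[of "y ` {..<N0}" "L ` S"] by auto
      also have "\<dots> \<le> N0" using card_image_le[of "{..<N0}" y] by simp
      finally have "card (L ` S) \<le> N0" .
      moreover have "card (L ` S) = card S"
        by (rule card_image) (rule inj_on_subset[OF inj real_vector.span_superset])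
      ultimately show False using S(2) by simp
    qed
    then obtain z where z: "z \<in> span S" "z \<noteq> 0" "L z = 0" by blast
    have zZ: "z \<in> Z" using z(1) spanSZ by auto
    have phiz: "\<phi> k z = 0" if "k < N0" for k
      using phiL[OF that, of z] z(3) real_vector.linear_0[OF linphi] by simp
    have "z \<in> closure (span (range y))" using zZ Z(1) by auto
    then obtain s where s: "\<And>j. s j \<in> span (range y)" "s \<longlonglongrightarrow> z"
      unfolding closure_sequential by blast
    define s' where "s' j = s j - L (s j)" for j
    have s'span: "s' j \<in> span (range y)" for j
      unfolding s'_def using s(1) Lspan2 by (intro real_vector.span_diff) auto
    have s'phi: "\<phi> k (s' j) = 0" if "k < N0" for k j
      unfolding s'_def using phiL[OF that] by (simp add: real_vector.linear_diff[OF linphi])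
    have "(\<lambda>j. L (s j)) \<longlonglongrightarrow> L z" using s(2) by (rule bounded_linear.tendsto[OF blL])
    then have s'lim: "s' \<longlonglongrightarrow> z" unfolding s'_def using s(2) tendsto_diff z(3) by fastforce
    have "(\<lambda>j. norm (T (s' j))) \<longlonglongrightarrow> norm (T z)"
      by (intro tendsto_norm bounded_linear.tendsto[OF T] s'lim)
    moreover have "(\<lambda>j. \<tau> N0 * norm (s' j)) \<longlonglongrightarrow> \<tau> N0 * norm z"
      by (intro tendsto_mult tendsto_const tendsto_norm s'lim)
    moreover have "\<forall>j. norm (T (s' j)) \<le> \<tau> N0 * norm (s' j)"
      using tail[OF s'span s'phi] by blast
    ultimately have "norm (T z) \<le> \<tau> N0 * norm z"
      by (intro tendsto_le[OF trivial_limit_sequentially]) auto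
    moreover have "cc * norm z \<le> norm (T z)" using cc(2)[OF zZ] .
    moreover have "0 < norm z" using z(2) by simp
    ultimately show False using tauc by (smt (verit) mult_strict_right_mono)
  qed
qed

end


context frep begin

lemma step_lemma:
  fixes T :: "'e \<Rightarrow> 'y::real_normed_vector"
  assumes OC: "order_continuous TYPE('e)" and T: "bounded_linear T"
    and K: "K > 0" "\<And>x. norm (T x) \<le> norm x * K"
    and fail: "\<And>r. r > 0 \<Longrightarrow> \<exists>A\<in>sets M. measure M A < r \<and> \<not> iso_on T (band_of M J A)"
    and m: "m > 0" and d: "d > 0"
  shows "\<exists>A u \<rho>. A \<in> sets M \<and> measure M A < m \<and> ess_bounded M (J u)
     \<and> (AE t in M. J u t \<noteq> 0 \<longrightarrow> t \<in> A) \<and> 1/2 \<le> norm u \<and> norm (T u) \<le> d/2 \<and> \<rho> > 0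
     \<and> (\<forall>B\<in>sets M. measure M B < \<rho> \<longrightarrow>
          (\<forall>w. (AE t in M. J w t = indicator B t * J u t) \<longrightarrow> norm w < min (1/4) (d/(2*K))))"
proof -
  have linT: "linear T" using T by (rule bounded_linear.linear)
  obtain A where A: "A \<in> sets M" "measure M A < m" "\<not> iso_on T (band_of M J A)" using fail[OF m] by blast
  from A(3) have "\<not> (\<forall>z\<in>band_of M J A. d/4 * norm z \<le> norm (T z))"
    unfolding iso_on_def using d by (metis divide_pos_pos zero_less_numeral)
  then obtain z where z: "z \<in> band_of M J A" "norm (T z) < d/4 * norm z" by (auto simp: not_le)
  have zn: "z \<noteq> 0" using z(2) by auto
  define z1 where "z1 = (1 / norm z) *\<^sub>R z"
  have nz1: "norm z1 = 1" unfolding z1_def using zn by simp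
  have Tz1: "norm (T z1) < d/4"
  proof -
    have "T z1 = (1 / norm z) *\<^sub>R T z" unfolding z1_def by (simp add: real_vector.linear_scale[OF linT])
    then have "norm (T z1) = norm (T z) / norm z" by simp
    also have "\<dots> < d/4" using z(2) zn by (simp add: divide_less_eq)
    finally show ?thesis .
  qed
  have z1A: "AE t in M. J z1 t \<noteq> 0 \<longrightarrow> t \<in> A"
    using z(1) Jscale[of "1 / norm z" z] unfolding band_of_def z1_def by (auto elim: AE_mp)
  define \<delta> where "\<delta> = min (1/2) (d/(4*K))"
  have \<delta>pos: "\<delta> > 0" unfolding \<delta>_def using d K by simp
  obtain v where v: "ess_bounded M (J v)" "norm (z1 - v) < \<delta>" using dense_bdd[OF \<delta>pos] by blast
  obtain u where u: "AE t in M. J u t = indicator A t * J v t" using restrict_ex[OF v(1) A(1)] by blast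
  have "norm (z1 - u) \<le> norm (z1 - v)"
  proof (rule norm_mono)
    show "AE t in M. \<bar>J (z1 - u) t\<bar> \<le> \<bar>J (z1 - v) t\<bar>"
      using u z1A Jdiff[of z1 u] Jdiff[of z1 v] by eventually_elim (auto simp: indicator_def)
  qed
  then have zu: "norm (z1 - u) < \<delta>" using v(2) by simp
  have ub: "ess_bounded M (J u)"
  proof -
    obtain C where "AE t in M. \<bar>J v t\<bar> \<le> C" using v(1) unfolding ess_bounded_def by blast
    then have "AE t in M. \<bar>J u t\<bar> \<le> max C 0" using u by eventually_elim (auto simp: indicator_def)
    then show ?thesis unfolding ess_bounded_def by blast
  qed
  have uA: "AE t in M. J u t \<noteq> 0 \<longrightarrow> t \<in> A" using u by eventually_elim (auto simp: indicator_def)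
  have un: "1/2 \<le> norm u"
  proof -
    have "norm z1 \<le> norm u + norm (z1 - u)" by (rule norm_triangle_sub)
    then show ?thesis using nz1 zu unfolding \<delta>_def by linarith
  qed
  have Tu: "norm (T u) \<le> d/2"
  proof -
    have "T u = T z1 + T (u - z1)" by (simp add: real_vector.linear_diff[OF linT])
    then have "norm (T u) \<le> norm (T z1) + norm (T (u - z1))" by (metis norm_triangle_ineq)
    also have "norm (T (u - z1)) \<le> norm (u - z1) * K" by (rule K(2))
    also have "norm (u - z1) * K \<le> \<delta> * K" using zu K(1) by (simp add: norm_minus_commute)
    also have "\<delta> * K \<le> d/4"
    proof -
      have "\<delta> \<le> d/(4*K)" unfolding \<delta>_def by simp
      then have "\<delta> * K \<le> d/(4*K) * K" using K(1) by (rule mult_right_mono[OF _ less_imp_le])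
      also have "\<dots> = d/4" using K(1) by simp
      finally show ?thesis .
    qed
    finally show ?thesis using Tz1 by linarith
  qed
  have etapos: "min (1/4) (d/(2*K)) > (0::real)" using d K by simp
  obtain \<rho> where "\<rho> > 0" "\<forall>B\<in>sets M. measure M B < \<rho> \<longrightarrow>
          (\<forall>w. (AE t in M. J w t = indicator B t * J u t) \<longrightarrow> norm w < min (1/4) (d/(2*K)))"
    using abs_cont[OF OC ub etapos] by blast
  then show ?thesis using A(1,2) ub uA un Tu by blast
qed


lemma main:
  fixes T :: "'e \<Rightarrow> 'y::banach"
  assumes OC: "order_continuous TYPE('e)" and DN: "DN_S T"
  shows "\<exists>r>0. \<forall>A \<in> sets M. 0 < measure M A \<and> measure M A < r \<longrightarrow> iso_on T (band_of M J A)"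
proof (rule ccontr)
  interpret prob_space M by (rule prob)
  assume neg: "\<not> ?thesis"
  have fail: "\<exists>A\<in>sets M. measure M A < r \<and> \<not> iso_on T (band_of M J A)" if "r > 0" for r
    using neg that by blast
  have T: "bounded_linear T" using DN unfolding DN_S_def by blast
  have linT: "linear T" using T by (rule bounded_linear.linear)
  obtain K where K: "K > 0" "\<And>x. norm (T x) \<le> norm x * K" using bounded_linear.pos_bounded[OF T] by blast
  define Q where "Q d m A u \<rho> \<longleftrightarrow> A \<in> sets M \<and> measure M A < m \<and> ess_bounded M (J u)
     \<and> (AE t in M. J u t \<noteq> 0 \<longrightarrow> t \<in> A) \<and> 1/2 \<le> norm u \<and> norm (T u) \<le> d/2 \<and> \<rho> > 0
     \<and> (\<forall>B\<in>sets M. measure M B < \<rho> \<longrightarrow>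
          (\<forall>w. (AE t in M. J w t = indicator B t * J u t) \<longrightarrow> norm w < min (1/4) (d/(2*K))))"
    for d m A u \<rho>
  define G where "G d m = (SOME X. Q d m (fst X) (fst (snd X)) (snd (snd X)))" for d m
  have GQ: "Q d m (fst (G d m)) (fst (snd (G d m))) (snd (snd (G d m)))" if "m > 0" "d > 0" for d m
  proof -
    from step_lemma[OF OC T K fail that] obtain A u \<rho> where "Q d m A u \<rho>" unfolding Q_def by blast
    then have "\<exists>X. Q d m (fst X) (fst (snd X)) (snd (snd X))" by (intro exI[of _ "(A, u, \<rho>)"]) simp
    then show ?thesis unfolding G_def by (rule someI_ex)
  qed
  define dd where "dd n = (1/4::real)^n" for n :: nat
  have ddpos: "dd n > 0" for n unfolding dd_def by simp
  define mm where "mm = rec_nat (1::real) (\<lambda>n m. min m (snd (snd (G (dd n) m))) / 4)"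
  have mm0: "mm 0 = 1" unfolding mm_def by simp
  have mmS: "mm (Suc n) = min (mm n) (snd (snd (G (dd n) (mm n)))) / 4" for n unfolding mm_def by simp
  define Aq where "Aq n = fst (G (dd n) (mm n))" for n
  define uq where "uq n = fst (snd (G (dd n) (mm n)))" for n
  define \<rho> where "\<rho> n = snd (snd (G (dd n) (mm n)))" for n
  have mmpos: "mm n > 0" for n
  proof (induction n)
    case 0 then show ?case by (simp add: mm0)
  next
    case (Suc n)
    have "\<rho> n > 0" using GQ[OF Suc ddpos[of n]] unfolding Q_def \<rho>_def by blast
    then show ?case using Suc by (simp add: mmS \<rho>_def)
  qed
  have Qn: "Q (dd n) (mm n) (Aq n) (uq n) (\<rho> n)" for n
    unfolding Aq_def uq_def \<rho>_def by (rule GQ[OF mmpos ddpos])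
  note Qn' = Qn[unfolded Q_def]
  have Aqs: "Aq n \<in> sets M" for n using Qn' by blast
  have mmbound: "mm (k + Suc n) \<le> \<rho> n / 4 * (1/4)^k" for k n
  proof (induction k)
    case 0 then show ?case by (simp add: mmS \<rho>_def)
  next
    case (Suc k)
    have "mm (Suc k + Suc n) \<le> mm (k + Suc n) / 4" by (simp add: mmS del: add_Suc_right)
    then show ?case using Suc by simp
  qed
  define U where "U n = (\<Union>k. Aq (k + Suc n))" for n
  have Us: "U n \<in> sets M" for n unfolding U_def using Aqs by auto
  have Um: "measure M (U n) < \<rho> n" for n
  proof -
    have rpos: "\<rho> n > 0" using Qn' by blast
    have sg: "summable (\<lambda>k. \<rho> n / 4 * (1/4::real)^k)" by (simp add: summable_mult)
    have le: "measure M (Aq (k + Suc n)) \<le> \<rho> n / 4 * (1/4)^k" for k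
      using Qn'[of "k + Suc n"] mmbound[of k n] by linarith
    have sm: "summable (\<lambda>k. measure M (Aq (k + Suc n)))"
      by (rule summable_comparison_test'[OF sg, of 0]) (use le in auto)
    have "measure M (U n) \<le> (\<Sum>k. measure M (Aq (k + Suc n)))"
      unfolding U_def by (rule finite_measure_subadditive_countably) (use Aqs sm in auto)
    also have "\<dots> \<le> (\<Sum>k. \<rho> n / 4 * (1/4::real)^k)" by (rule suminf_le[OF le sm sg])
    also have "\<dots> = \<rho> n / 3"
      using suminf_mult[of "\<lambda>k. (1/4::real)^k" "\<rho> n / 4"] suminf_geometric[of "1/4::real"] by simp
    finally show ?thesis using rpos by simp
  qed
  define Dq where "Dq n = Aq n - U n" for n
  have Dqs: "Dq n \<in> sets M" for n unfolding Dq_def using Aqs Us by auto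
  have "\<exists>y. AE t in M. J y t = indicator (Dq n) t * J (uq n) t" for n
    using restrict_ex[OF _ Dqs] Qn' by blast
  then obtain y where y: "\<And>n. AE t in M. J (y n) t = indicator (Dq n) t * J (uq n) t" by metis
  have "\<exists>r. AE t in M. J r t = indicator (U n) t * J (uq n) t" for n
    using restrict_ex[OF _ Us] Qn' by blast
  then obtain r where r: "\<And>n. AE t in M. J (r n) t = indicator (U n) t * J (uq n) t" by metis
  have rn: "norm (r n) < min (1/4) (dd n / (2*K))" for n
    using Qn'[of n] Us[of n] Um[of n] r[of n] by blast
  have uy: "norm (uq n - y n) \<le> norm (r n)" for n
  proof (rule norm_mono)
    have uA: "AE t in M. J (uq n) t \<noteq> 0 \<longrightarrow> t \<in> Aq n" using Qn' by blast
    show "AE t in M. \<bar>J (uq n - y n) t\<bar> \<le> \<bar>J (r n) t\<bar>"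
      using uA y[of n] r[of n] Jdiff[of "uq n" "y n"]
      by eventually_elim (auto simp: indicator_def Dq_def)
  qed
  have Y1: "1/4 \<le> norm (y n)" for n
  proof -
    have "norm (uq n) \<le> norm (y n) + norm (uq n - y n)" by (rule norm_triangle_sub)
    moreover have "1/2 \<le> norm (uq n)" using Qn' by blast
    ultimately show ?thesis using uy[of n] rn[of n] by linarith
  qed
  have Y2: "norm (T (y n)) \<le> (1/4)^n" for n
  proof -
    have "T (y n) = T (uq n) - T (uq n - y n)" by (simp add: real_vector.linear_diff[OF linT])
    then have "norm (T (y n)) \<le> norm (T (uq n)) + norm (T (uq n - y n))" by (metis norm_triangle_ineq4)
    also have "norm (T (uq n - y n)) \<le> norm (uq n - y n) * K" by (rule K(2))
    also have "norm (uq n - y n) * K \<le> dd n / (2*K) * K"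
      using uy[of n] rn[of n] K(1) by (intro mult_right_mono) auto
    also have "dd n / (2*K) * K = dd n / 2" using K(1) by simp
    finally have "norm (T (y n)) \<le> norm (T (uq n)) + dd n / 2" by simp
    moreover have "norm (T (uq n)) \<le> dd n / 2" using Qn' by blast
    ultimately show ?thesis unfolding dd_def by simp
  qed
  have Y3: "ess_bounded M (J (y n))" for n
  proof -
    obtain C where "AE t in M. \<bar>J (uq n) t\<bar> \<le> C" using Qn'[of n] unfolding ess_bounded_def by blast
    then have "AE t in M. \<bar>J (y n) t\<bar> \<le> max C 0" using y[of n] by eventually_elim (auto simp: indicator_def)
    then show ?thesis unfolding ess_bounded_def by blast
  qed
  have DU: "Dq m \<subseteq> U n" if "n < m" for n m
  proof -
    have "m = (m - Suc n) + Suc n" using that by simp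
    then have "Aq m \<subseteq> U n" unfolding U_def by (metis UN_upper UNIV_I)
    then show ?thesis unfolding Dq_def by auto
  qed
  have Y4': "AE t in M. J (y n) t * J (y m) t = 0" if "n < m" for n m
    using y[of n] y[of m] by eventually_elim (use DU[OF that] in \<open>auto simp: indicator_def Dq_def\<close>)
  have Y4: "AE t in M. J (y n) t * J (y m) t = 0" if "n \<noteq> m" for n m
  proof (cases "n < m")
    case True then show ?thesis by (rule Y4')
  next
    case False
    with that have "m < n" by simp
    from Y4'[OF this] show ?thesis by (simp add: mult.commute)
  qed
  have ss: "strictly_singular_on T (closure (span (range y)))"
    by (rule final_ss[OF T Y1 Y2 Y3 Y4])
  have nz: "\<forall>n. y n \<noteq> 0" using Y1 by (metis norm_zero not_le zero_less_divide_1_iff zero_less_numeral)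
  have dj: "\<forall>n m. n \<noteq> m \<longrightarrow> disjoint_elems (y n) (y m)" using Y4 disj_from_AE by blast
  show False using DN nz dj ss unfolding DN_S_def by blast
qed

end


theorem corollary3p2:
  fixes M :: "'w measure"
    and J :: "'e::{banach, ordered_real_vector, lattice} \<Rightarrow> 'w \<Rightarrow> real"
    and T :: "'e \<Rightarrow> 'y::banach"
    and e :: 'e
  assumes "banach_lattice TYPE('e)"
    and "order_continuous TYPE('e)"
    and "weak_unit e"
    and "function_representation M J"
    and "DN_S T"
  shows "\<exists>r>0. \<forall>A \<in> sets M. 0 < measure M A \<and> measure M A < r \<longrightarrow> iso_on T (band_of M J A)"
proof -
  interpret frep M J using assms(4,1) by unfold_locales
  show ?thesis by (rule main[OF assms(2,5)])
qed

end
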